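(* Let $R_t\in\mathbb R^{K\times K}$ and $M_t\in\mathbb R^{d\times d}$ be symmetric positive definite, $G_t\in\mathbb R^{K\times d}$, $r_t^\star,\varepsilon_t^\theta\in\mathbb R^K$, $r_t=r_t^\star-\varepsilon_t^\theta$, and $\ell_t(u;r)=\frac12\|r-G_tu\|^2_{R_t^{-1}}$. Assume $\|\varepsilon_t^\theta\|_{R_t^{-1}}\le B_t^\theta$ and $G_t^\top R_t^{-1}G_t\preceq\alpha_tM_t$ for some $B_t^\theta\ge0$, $\alpha_t\ge0$. Then for every pair $m,v\in\mathbb R^d$, $$\ell_t(m;r_t)-\ell_t(v;r_t)\le\ell_t(m;r_t^\star)-\ell_t(v;r_t^\star)+\frac{\alpha_t}{2}\|m-v\|^2_{M_t}+\frac12(B_t^\theta)^2.$$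
   Context: $\|a\|^2_{M}=a^\top Ma$; $\preceq$ is the Loewner order. In the application, $M_t$ is the pre-update precision of the discrepancy state, $r_t^\star$ the residual against the oracle projected simulator anchor, $\varepsilon_t^\theta$ the anchor error, and $r_t$ the residual used by the discrepancy update. *)

theory Defs
  imports "HOL-Analysis.Analysis"
begin

definition wnorm2 :: "real^'n \<Rightarrow> real^'n^'n \<Rightarrow> real" where
  "wnorm2 a M = a \<bullet> (M *v a)"

definition symmetric_pd :: "real^'n^'n \<Rightarrow> bool" where
  "symmetric_pd M \<longleftrightarrow> transpose M = M \<and> (\<forall>x. x \<noteq> 0 \<longrightarrow> x \<bullet> (M *v x) > 0)"

definition loewner_le :: "real^'n^'n \<Rightarrow> real^'n^'n \<Rightarrow> bool" where
  "loewner_le A B \<longleftrightarrow> (\<forall>x. x \<bullet> ((B - A) *v x) \<ge> 0)"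

definition loss :: "real^'k^'k \<Rightarrow> real^'d^'k \<Rightarrow> real^'d \<Rightarrow> real^'k \<Rightarrow> real" where
  "loss R G u r = (1/2) * wnorm2 (r - G *v u) (matrix_inv R)"

end

theory Submission
  imports Defs
begin

lemma pd_inv_psd:
  fixes R :: "real^'k^'k"
  assumes "symmetric_pd R"
  shows "x \<bullet> (matrix_inv R *v x) \<ge> 0"
proof -
  have inj: "\<forall>y. R *v y = 0 \<longrightarrow> y = 0"
  proof (intro allI impI)
    fix y assume "R *v y = 0"
    then have "y \<bullet> (R *v y) = 0" by simp
    then show "y = 0" using assms unfolding symmetric_pd_def by (metis less_irrefl)
  qed
  then have "\<exists>B. B ** R = mat 1" using matrix_left_invertible_ker by blast
  then have "invertible R" using invertible_left_inverse by blast
  then have "\<exists>A'. R ** A' = mat 1 \<and> A' ** R = mat 1" unfolding invertible_def .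
  then have RP: "R ** matrix_inv R = mat 1" unfolding matrix_inv_def by (rule someI_ex[THEN conjunct1])
  define y where "y = matrix_inv R *v x"
  have xR: "x = R *v y" unfolding y_def matrix_vector_mul_assoc RP by simp
  have "x \<bullet> (matrix_inv R *v x) = (R *v y) \<bullet> y" using xR y_def by simp
  also have "\<dots> = (y v* transpose R) \<bullet> y" by simp
  also have "\<dots> = y \<bullet> (R *v y)" by (simp add: dot_lmul_matrix assms[unfolded symmetric_pd_def])
  finally have eq: "x \<bullet> (matrix_inv R *v x) = y \<bullet> (R *v y)" .
  show ?thesis
  proof (cases "y = 0")
    case True then show ?thesis using eq by simp
  next
    case False then show ?thesis using eq assms unfolding symmetric_pd_def
      by (metis less_imp_le)
  qed
qed

lemma transp_quad:
  fixes G :: "real^'d^'k" and P :: "real^'k^'k"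
  shows "w \<bullet> ((transpose G ** P ** G) *v w) = (G *v w) \<bullet> (P *v (G *v w))"
proof -
  have "w \<bullet> ((transpose G ** P ** G) *v w) = w \<bullet> (transpose G *v (P *v (G *v w)))"
    by (simp add: matrix_vector_mul_assoc matrix_mul_assoc)
  also have "\<dots> = (w v* transpose G) \<bullet> (P *v (G *v w))" by (simp only: dot_lmul_matrix)
  also have "\<dots> = (G *v w) \<bullet> (P *v (G *v w))" by simp
  finally show ?thesis .
qed

theorem corollary2:
  fixes R :: "real^'k^'k" and M :: "real^'d^'d" and G :: "real^'d^'k"
    and rstar eps r :: "real^'k" and B alpha :: real
  assumes "symmetric_pd R" and "symmetric_pd M"
    and "r = rstar - eps"
    and "B \<ge> 0" and "alpha \<ge> 0"
    and "sqrt (wnorm2 eps (matrix_inv R)) \<le> B"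
    and "loewner_le (transpose G ** matrix_inv R ** G) (alpha *\<^sub>R M)"
  shows "\<forall>m v :: real^'d.
    loss R G m r - loss R G v r
      \<le> loss R G m rstar - loss R G v rstar + alpha / 2 * wnorm2 (m - v) M + (1/2) * B\<^sup>2"
proof (intro allI)
  fix m v :: "real^'d"
  define P where "P = matrix_inv R"
  define q where "q x y = x \<bullet> (P *v y)" for x y
  have psd: "q x x \<ge> 0" for x unfolding q_def P_def using pd_inv_psd[OF assms(1)] .
  have qdl: "q (x - y) z = q x z - q y z" for x y z unfolding q_def by (simp add: inner_diff_left)
  have qdr: "q z (x - y) = q z x - q z y" for x y z unfolding q_def
    by (simp add: matrix_vector_mult_diff_distrib inner_diff_right)
  define a where "a = rstar - G *v m"
  define b where "b = rstar - G *v v"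
  define e where "e = eps"
  define x where "x = b - a"
  have ee: "q e e \<le> B\<^sup>2"
  proof -
    have "sqrt (q e e) \<le> B" using assms(6) unfolding q_def e_def P_def wnorm2_def .
    then have "(sqrt (q e e))\<^sup>2 \<le> B\<^sup>2" by (rule power_mono) (rule real_sqrt_ge_zero[OF psd])
    then show ?thesis using psd[of e] by simp
  qed
  have xx: "q x x \<le> alpha * wnorm2 (m - v) M"
  proof -
    have xg: "x = G *v (m - v)" unfolding x_def a_def b_def
      by (simp add: matrix_vector_mult_diff_distrib)
    have "0 \<le> (m - v) \<bullet> ((alpha *\<^sub>R M - transpose G ** P ** G) *v (m - v))"
      using assms(7) unfolding loewner_le_def P_def by blast
    also have "\<dots> = alpha * ((m - v) \<bullet> (M *v (m - v))) - q x x"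
      unfolding q_def xg transp_quad[symmetric] matrix_vector_mult_diff_rdistrib inner_diff_right
        scaleR_matrix_vector_assoc[symmetric] inner_scaleR_right ..
    finally show ?thesis unfolding wnorm2_def by simp
  qed
  have cross: "q x e + q e x \<le> q x x + q e e"
    using psd[of "x - e"] by (simp add: qdl qdr)
  have v1: "r - G *v m = a - e" unfolding assms(3) a_def e_def by (simp add: diff_diff_eq add.commute)
  have v2: "r - G *v v = b - e" unfolding assms(3) b_def e_def by (simp add: diff_diff_eq add.commute)
  have l1: "loss R G m r = (1/2) * q (a - e) (a - e)"
    unfolding loss_def wnorm2_def q_def P_def v1 by simp
  have l2: "loss R G v r = (1/2) * q (b - e) (b - e)"
    unfolding loss_def wnorm2_def q_def P_def v2 by simp
  have l3: "loss R G m rstar = (1/2) * q a a"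
    unfolding loss_def wnorm2_def q_def P_def a_def by simp
  have l4: "loss R G v rstar = (1/2) * q b b"
    unfolding loss_def wnorm2_def q_def P_def b_def by simp
  have bx: "b = a + x" unfolding x_def by simp
  have qal: "q (y + z) w = q y w + q z w" for y z w unfolding q_def by (simp add: inner_add_left)
  have qar: "q w (y + z) = q w y + q w z" for y z w unfolding q_def
    by (simp add: matrix_vector_right_distrib inner_add_right)
  have key: "q (a - e) (a - e) - q (b - e) (b - e) = q a a - q b b + q x e + q e x"
    unfolding bx qdl qdr qal qar by (simp add: algebra_simps)
  show "loss R G m r - loss R G v r
      \<le> loss R G m rstar - loss R G v rstar + alpha / 2 * wnorm2 (m - v) M + (1/2) * B\<^sup>2"
    unfolding l1 l2 l3 l4 using key cross xx ee by linarith
qed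

end
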